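(* Let $k\ge3$ and let $G,H$ be $2$-connected graphs of minimum degree at least $3$ that are not $3$-connected. For vertices $v\in V(G_\perp)$ and $w\in V(H)\setminus V(H_\perp)$ we have $\chi^k_G(v)\ne\chi^k_H(w)$.
   Context: Graphs are finite, simple, undirected (possibly colored). A graph is $k$-connected if it has more than $k$ vertices and removing fewer than $k$ vertices leaves it connected. A separator of $G$ is a set $S$ with $G-S$ disconnected. $P(G)$ is the set of pairs $(S,K)$ with $S$ a separator of minimum cardinality and $K$ the vertex set of a connected component of $G-S$, partially ordered by $(S,K)\le(S',K')$ iff $K\subseteq K'$; $P_0(G)$ is the set of minimal elements; $V(G_\perp):=V(G)\setminus\bigcup_{(S,K)\in P_0(G)}K$. For $k\ge2$, the $k$-dimensional Weisfeiler–Leman algorithm computes a coloring of $V(G)^k$: the initial color of a tuple consists of its input color and the isomorphism type of the ordered induced subgraph on its entries; in each round the new color of $\bar v$ is the pair of its old color and the multiset, over $w\in V(G)$, of the $k$-tuples whose $i$-th component is the old color of $\bar v$ with its $i$-th entry replaced by $w$; the stable coloring is $\chi^k_G$, with canonical colors comparable across graphs. $\chi^k_G(v):=\chi^k_G(v,\dots,v)$. *)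

theory Defs
  imports Main "HOL-Library.Multiset"
begin

definition graph :: "'a set \<Rightarrow> ('a \<Rightarrow> 'a \<Rightarrow> bool) \<Rightarrow> bool" where
  "graph V E \<longleftrightarrow> finite V \<and> (\<forall>u v. E u v \<longrightarrow> u \<in> V \<and> v \<in> V)
      \<and> (\<forall>u v. E u v \<longrightarrow> E v u) \<and> (\<forall>v. \<not> E v v)"

definition reach :: "('a \<Rightarrow> 'a \<Rightarrow> bool) \<Rightarrow> 'a set \<Rightarrow> 'a \<Rightarrow> 'a \<Rightarrow> bool" where
  "reach E X = (\<lambda>x y. E x y \<and> x \<in> X \<and> y \<in> X)\<^sup>*\<^sup>*"

definition connected_on :: "('a \<Rightarrow> 'a \<Rightarrow> bool) \<Rightarrow> 'a set \<Rightarrow> bool" where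
  "connected_on E X \<longleftrightarrow> X \<noteq> {} \<and> (\<forall>u\<in>X. \<forall>v\<in>X. reach E X u v)"

definition k_connected :: "'a set \<Rightarrow> ('a \<Rightarrow> 'a \<Rightarrow> bool) \<Rightarrow> nat \<Rightarrow> bool" where
  "k_connected V E k \<longleftrightarrow> card V > k \<and> (\<forall>S. S \<subseteq> V \<and> card S < k \<longrightarrow> connected_on E (V - S))"

definition separator :: "'a set \<Rightarrow> ('a \<Rightarrow> 'a \<Rightarrow> bool) \<Rightarrow> 'a set \<Rightarrow> bool" where
  "separator V E S \<longleftrightarrow> S \<subseteq> V \<and> (\<exists>u\<in>V - S. \<exists>v\<in>V - S. \<not> reach E (V - S) u v)"

definition min_separator :: "'a set \<Rightarrow> ('a \<Rightarrow> 'a \<Rightarrow> bool) \<Rightarrow> 'a set \<Rightarrow> bool" where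
  "min_separator V E S \<longleftrightarrow> separator V E S \<and> (\<forall>S'. separator V E S' \<longrightarrow> card S \<le> card S')"

definition component :: "('a \<Rightarrow> 'a \<Rightarrow> bool) \<Rightarrow> 'a set \<Rightarrow> 'a set \<Rightarrow> bool" where
  "component E X K \<longleftrightarrow> (\<exists>u\<in>X. K = {v \<in> X. reach E X u v})"

definition PG :: "'a set \<Rightarrow> ('a \<Rightarrow> 'a \<Rightarrow> bool) \<Rightarrow> ('a set \<times> 'a set) set" where
  "PG V E = {(S, K). min_separator V E S \<and> component E (V - S) K}"

definition P0 :: "'a set \<Rightarrow> ('a \<Rightarrow> 'a \<Rightarrow> bool) \<Rightarrow> ('a set \<times> 'a set) set" where
  "P0 V E = {p \<in> PG V E. \<not> (\<exists>q \<in> PG V E. snd q \<subset> snd p)}"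

definition V_bot :: "'a set \<Rightarrow> ('a \<Rightarrow> 'a \<Rightarrow> bool) \<Rightarrow> 'a set" where
  "V_bot V E = V - (\<Union>p \<in> P0 V E. snd p)"

definition min_degree_ge :: "'a set \<Rightarrow> ('a \<Rightarrow> 'a \<Rightarrow> bool) \<Rightarrow> nat \<Rightarrow> bool" where
  "min_degree_ge V E d \<longleftrightarrow> (\<forall>v\<in>V. card {u \<in> V. E v u} \<ge> d)"

text \<open>Canonical k-WL colours, as concrete terms (hence comparable across graphs).
  Init: input colours of the entries, and the isomorphism type of the ordered
  induced subgraph (equality and adjacency pattern).\<close>
datatype 'c wlcol = Init "'c list" "(bool \<times> bool) list list"
                  | Ref "'c wlcol" "'c wlcol list multiset"

fun wl :: "nat \<Rightarrow> 'a set \<Rightarrow> ('a \<Rightarrow> 'a \<Rightarrow> bool) \<Rightarrow> ('a \<Rightarrow> 'c) \<Rightarrow> nat \<Rightarrow> 'a list \<Rightarrow> 'c wlcol" where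
  "wl k V E col 0 vs =
     Init (map col vs) (map (\<lambda>i. map (\<lambda>j. (vs ! i = vs ! j, E (vs ! i) (vs ! j))) [0..<k]) [0..<k])"
| "wl k V E col (Suc r) vs =
     Ref (wl k V E col r vs)
         (image_mset (\<lambda>w. map (\<lambda>i. wl k V E col r (vs[i := w])) [0..<k]) (mset_set V))"

text \<open>Equality of stable k-WL colours of the diagonal tuples (v,...,v) and (w,...,w):
  the colours agree in every round (the stable colour determines and is determined by
  the colours of all rounds).\<close>
definition wl_same_vertex_color ::
  "nat \<Rightarrow> 'a set \<Rightarrow> ('a \<Rightarrow> 'a \<Rightarrow> bool) \<Rightarrow> ('a \<Rightarrow> 'c) \<Rightarrow> 'a
     \<Rightarrow> 'b set \<Rightarrow> ('b \<Rightarrow> 'b \<Rightarrow> bool) \<Rightarrow> ('b \<Rightarrow> 'c) \<Rightarrow> 'b \<Rightarrow> bool" where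
  "wl_same_vertex_color k VG EG cG v VH EH cH w \<longleftrightarrow>
     (\<forall>r. wl k VG EG cG r (replicate k v) = wl k VH EH cH r (replicate k w))"

end

theory Submission
  imports Defs "HOL-Library.FuncSet" "HOL-Library.Infinite_Set"
begin


definition eqv where
  "eqv k V1 E1 c1 V2 E2 c2 t1 t2 \<longleftrightarrow> (\<forall>r. wl k V1 E1 c1 r t1 = wl k V2 E2 c2 r t2)"

lemma eqv_sym: "eqv k V1 E1 c1 V2 E2 c2 t1 t2 \<Longrightarrow> eqv k V2 E2 c2 V1 E1 c1 t2 t1"
  unfolding eqv_def by metis

lemma wl_Suc_eq: "wl k V1 E1 c1 (Suc r) t1 = wl k V2 E2 c2 (Suc r) t2 \<Longrightarrow> wl k V1 E1 c1 r t1 = wl k V2 E2 c2 r t2"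
  by (simp only: wl.simps wlcol.inject)

lemma wl_add_eq:
  "wl k V1 E1 c1 (r + d) t1 = wl k V2 E2 c2 (r + d) t2 \<Longrightarrow> wl k V1 E1 c1 r t1 = wl k V2 E2 c2 r t2"
proof (induction d)
  case 0 then show ?case by (simp only: add_0_right)
next
  case (Suc d)
  then show ?case using wl_Suc_eq[of k V1 E1 c1 "r + d" t1 V2 E2 c2 t2] by (simp only: add_Suc_right)
qed

lemma wl_le_eq:
  assumes "r \<le> r2" "wl k V1 E1 c1 r2 t1 = wl k V2 E2 c2 r2 t2"
  shows "wl k V1 E1 c1 r t1 = wl k V2 E2 c2 r t2"
proof -
  obtain d where "r2 = r + d" using assms(1) le_Suc_ex by blast
  then show ?thesis using assms(2) wl_add_eq by blast
qed

lemma mset_bij: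
  assumes "finite A" "finite B" "image_mset f (mset_set A) = image_mset g (mset_set B)"
  shows "\<exists>h. bij_betw h A B \<and> (\<forall>x\<in>A. f x = g (h x))"
  using assms
proof (induction A arbitrary: B rule: finite_induct)
  case empty
  then have "mset_set B = {#}" by simp
  then have "B = {}" using empty.prems(1) by (simp add: mset_set_empty_iff)
  then show ?case by (auto simp: bij_betw_def)
next
  case (insert x A B)
  have e: "add_mset (f x) (image_mset f (mset_set A)) = image_mset g (mset_set B)"
    using insert by simp
  then have "f x \<in># image_mset g (mset_set B)" by (metis union_single_eq_member)
  then obtain y where y: "y \<in> B" "g y = f x" using insert.prems(1) by auto
  have mB: "mset_set B = add_mset y (mset_set (B - {y}))"
    using y insert.prems(1) by (simp add: mset_set.remove)
  have "image_mset f (mset_set A) = image_mset g (mset_set (B - {y}))"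
    using e mB y by simp
  then obtain h0 where h0: "bij_betw h0 A (B - {y})" "\<forall>x\<in>A. f x = g (h0 x)"
    using insert.IH[of "B - {y}"] insert.prems(1) by auto
  define h where "h = h0(x := y)"
  have b1: "bij_betw h A (B - {y})"
    using h0(1) insert.hyps(2) unfolding h_def by (metis bij_betw_cong fun_upd_other)
  have b2: "bij_betw h {x} {y}" unfolding h_def by (simp add: bij_betw_def)
  have "bij_betw h ({x} \<union> A) ({y} \<union> (B - {y}))"
    by (rule bij_betw_combine[OF b2 b1]) auto
  moreover have "{y} \<union> (B - {y}) = B" using y by auto
  ultimately have "bij_betw h (insert x A) B" by simp
  moreover have "\<forall>z\<in>insert x A. f z = g (h z)"
    using h0(2) y insert.hyps(2) unfolding h_def by auto
  ultimately show ?case by blast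
qed

lemma eqv_bij:
  assumes fin: "finite V1" "finite V2" and e: "eqv k V1 E1 c1 V2 E2 c2 t1 t2"
  shows "\<exists>f. bij_betw f V1 V2 \<and> (\<forall>x\<in>V1. \<forall>j<k. eqv k V1 E1 c1 V2 E2 c2 (t1[j:=x]) (t2[j:=f x]))"
proof -
  have "\<forall>r. \<exists>h. bij_betw h V1 V2 \<and> (\<forall>x\<in>V1. map (\<lambda>i. wl k V1 E1 c1 r (t1[i:=x])) [0..<k]
            = map (\<lambda>i. wl k V2 E2 c2 r (t2[i:=h x])) [0..<k])"
  proof
    fix r
    have "wl k V1 E1 c1 (Suc r) t1 = wl k V2 E2 c2 (Suc r) t2" using e unfolding eqv_def by blast
    then have "image_mset (\<lambda>w. map (\<lambda>i. wl k V1 E1 c1 r (t1[i := w])) [0..<k]) (mset_set V1)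
       = image_mset (\<lambda>w. map (\<lambda>i. wl k V2 E2 c2 r (t2[i := w])) [0..<k]) (mset_set V2)" by (simp only: wl.simps wlcol.inject)
    from mset_bij[OF fin this] show "\<exists>h. bij_betw h V1 V2 \<and> (\<forall>x\<in>V1. map (\<lambda>i. wl k V1 E1 c1 r (t1[i:=x])) [0..<k]
            = map (\<lambda>i. wl k V2 E2 c2 r (t2[i:=h x])) [0..<k])" by blast
  qed
  from choice[OF this] obtain H where H0: "\<forall>r. bij_betw (H r) V1 V2 \<and> (\<forall>x\<in>V1. map (\<lambda>i. wl k V1 E1 c1 r (t1[i:=x])) [0..<k]
            = map (\<lambda>i. wl k V2 E2 c2 r (t2[i:=H r x])) [0..<k])" by blast
  have H: "\<And>r. bij_betw (H r) V1 V2" 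
    "\<And>r x. x \<in> V1 \<Longrightarrow> map (\<lambda>i. wl k V1 E1 c1 r (t1[i:=x])) [0..<k]
            = map (\<lambda>i. wl k V2 E2 c2 r (t2[i:=H r x])) [0..<k]"
    using H0 by blast+
  define H' where "H' r = restrict (H r) V1" for r
  have "range H' \<subseteq> V1 \<rightarrow>\<^sub>E V2"
    unfolding H'_def using bij_betw_apply[OF H(1)] by (auto simp: restrict_PiE_iff)
  moreover have "finite (V1 \<rightarrow>\<^sub>E V2)" using fin by (simp add: finite_PiE)
  ultimately have "finite (range H')" by (rule finite_subset)
  from pigeonhole_infinite[OF _ this] obtain r0 where r0: "infinite {r. H' r = H' r0}" by auto
  define f where "f = H' r0"
  have bf: "bij_betw f V1 V2" unfolding f_def H'_def
    using H(1)[of r0] by (rule bij_betw_cong[THEN iffD1, rotated]) simp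
  have "\<forall>x\<in>V1. \<forall>j<k. eqv k V1 E1 c1 V2 E2 c2 (t1[j:=x]) (t2[j:=f x])"
  proof (intro ballI allI impI)
    fix x j assume x: "x \<in> V1" and j: "j < k"
    show "eqv k V1 E1 c1 V2 E2 c2 (t1[j:=x]) (t2[j:=f x])" unfolding eqv_def
    proof
      fix r
      obtain r2 where r2: "r2 \<ge> r" "H' r2 = H' r0" using r0 unfolding infinite_nat_iff_unbounded_le by blast
      have "H r2 x = f x" using r2 x unfolding f_def H'_def by (metis restrict_apply')
      then have "map (\<lambda>i. wl k V1 E1 c1 r2 (t1[i:=x])) [0..<k]
            = map (\<lambda>i. wl k V2 E2 c2 r2 (t2[i:=f x])) [0..<k]" using H(2)[OF x, of r2] by simp
      then have "wl k V1 E1 c1 r2 (t1[j:=x]) = wl k V2 E2 c2 r2 (t2[j:=f x])"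
        using j by (simp add: map_eq_conv)
      then show "wl k V1 E1 c1 r (t1[j:=x]) = wl k V2 E2 c2 r (t2[j:=f x])"
        using wl_le_eq r2(1) by blast
    qed
  qed
  with bf show ?thesis by blast
qed

lemma eqv_init:
  assumes e: "eqv k V1 E1 c1 V2 E2 c2 t1 t2" and ij: "i < k" "j < k"
  shows "(t1!i = t1!j \<longleftrightarrow> t2!i = t2!j) \<and> (E1 (t1!i) (t1!j) \<longleftrightarrow> E2 (t2!i) (t2!j))"
proof -
  have "wl k V1 E1 c1 0 t1 = wl k V2 E2 c2 0 t2" using e unfolding eqv_def by blast
  then have "map (\<lambda>i. map (\<lambda>j. (t1 ! i = t1 ! j, E1 (t1 ! i) (t1 ! j))) [0..<k]) [0..<k]
    = map (\<lambda>i. map (\<lambda>j. (t2 ! i = t2 ! j, E2 (t2 ! i) (t2 ! j))) [0..<k]) [0..<k]" by (simp only: wl.simps wlcol.inject)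
  then have "map (\<lambda>i. map (\<lambda>j. (t1 ! i = t1 ! j, E1 (t1 ! i) (t1 ! j))) [0..<k]) [0..<k] ! i ! j
    = map (\<lambda>i. map (\<lambda>j. (t2 ! i = t2 ! j, E2 (t2 ! i) (t2 ! j))) [0..<k]) [0..<k] ! i ! j" by (simp only:)
  then show ?thesis using ij by simp
qed



lemma reach_refl[simp]: "reach E X u u"
  unfolding reach_def by simp

lemma reach_edge: "E u v \<Longrightarrow> u \<in> X \<Longrightarrow> v \<in> X \<Longrightarrow> reach E X u v"
  unfolding reach_def by (simp add: r_into_rtranclp)

lemma reach_trans: "reach E X u v \<Longrightarrow> reach E X v w \<Longrightarrow> reach E X u w"
  unfolding reach_def by (rule rtranclp_trans)

lemma reach_step: "reach E X u v \<Longrightarrow> E v w \<Longrightarrow> v \<in> X \<Longrightarrow> w \<in> X \<Longrightarrow> reach E X u w"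
  using reach_trans reach_edge by metis

lemma reach_stepl: "E u v \<Longrightarrow> u \<in> X \<Longrightarrow> v \<in> X \<Longrightarrow> reach E X v w \<Longrightarrow> reach E X u w"
  using reach_trans reach_edge by metis

lemma reach_mono: "reach E X u v \<Longrightarrow> X \<subseteq> Y \<Longrightarrow> reach E Y u v"
  unfolding reach_def
proof (induction rule: rtranclp_induct)
  case base then show ?case by simp
next
  case (step y z) then show ?case by (auto intro: rtranclp.rtrancl_into_rtrancl)
qed

lemma reach_end: "reach E X u v \<Longrightarrow> u = v \<or> (u \<in> X \<and> v \<in> X)"
  unfolding reach_def
  by (induction rule: rtranclp_induct) auto

lemma reach_sym:
  assumes "\<And>x y. E x y \<Longrightarrow> E y x" "reach E X u v"
  shows "reach E X v u"
  using assms(2) unfolding reach_def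
proof (induction rule: rtranclp_induct)
  case base then show ?case by simp
next
  case (step y z)
  have "E z y" using assms(1) step by blast
  then show ?case using step by (auto intro: converse_rtranclp_into_rtranclp)
qed

lemma graph_sym: "graph V E \<Longrightarrow> E x y \<Longrightarrow> E y x"
  unfolding graph_def by blast

lemma graph_in: "graph V E \<Longrightarrow> E x y \<Longrightarrow> x \<in> V \<and> y \<in> V"
  unfolding graph_def by blast

lemma graph_irr: "graph V E \<Longrightarrow> \<not> E x x"
  unfolding graph_def by blast

lemma graph_fin: "graph V E \<Longrightarrow> finite V"
  unfolding graph_def by blast

lemma greach_sym: "graph V E \<Longrightarrow> reach E X u v \<Longrightarrow> reach E X v u"
  using reach_sym graph_sym by metis

fun W :: "'a set \<Rightarrow> ('a \<Rightarrow> 'a \<Rightarrow> bool) \<Rightarrow> 'a \<Rightarrow> nat \<Rightarrow> 'a \<Rightarrow> 'a \<Rightarrow> nat" where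
  "W V E a 0 p q = (if p = q then 1 else 0)"
| "W V E a (Suc l) p q = (\<Sum>z\<in>{z\<in>V. E p z \<and> z \<noteq> a}. W V E a l z q)"

fun Fp :: "'a set \<Rightarrow> ('a \<Rightarrow> 'a \<Rightarrow> bool) \<Rightarrow> 'a \<Rightarrow> 'a \<Rightarrow> nat \<Rightarrow> 'a \<Rightarrow> nat" where
  "Fp V E a b 0 p = (if p = b then 1 else 0)"
| "Fp V E a b (Suc i) p = (if p = b then 0 else (\<Sum>z\<in>{z\<in>V. E p z \<and> z \<noteq> a}. Fp V E a b i z))"

fun Wab :: "'a set \<Rightarrow> ('a \<Rightarrow> 'a \<Rightarrow> bool) \<Rightarrow> 'a \<Rightarrow> 'a \<Rightarrow> nat \<Rightarrow> 'a \<Rightarrow> 'a \<Rightarrow> nat" where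
  "Wab V E a b 0 p q = (if p = q \<and> p \<noteq> b then 1 else 0)"
| "Wab V E a b (Suc l) p q = (if p = b then 0 else (\<Sum>z\<in>{z\<in>V. E p z \<and> z \<noteq> a}. Wab V E a b l z q))"

lemma W_decomp:
  "W V E a l p q = Wab V E a b l p q + (\<Sum>i\<le>l. Fp V E a b i p * W V E a (l - i) b q)"
proof (induction l arbitrary: p)
  case 0 then show ?case by simp
next
  case (Suc l)
  show ?case
  proof (cases "p = b")
    case True
    then show ?thesis by (simp only: sum.atMost_Suc_shift) simp
  next
    case False
    define Z where "Z = {z\<in>V. E p z \<and> z \<noteq> a}"
    have "W V E a (Suc l) p q = (\<Sum>z\<in>Z. W V E a l z q)" by (simp add: Z_def)
    also have "... = (\<Sum>z\<in>Z. Wab V E a b l z q + (\<Sum>i\<le>l. Fp V E a b i z * W V E a (l - i) b q))"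
      using Suc.IH by simp
    also have "... = (\<Sum>z\<in>Z. Wab V E a b l z q) + (\<Sum>i\<le>l. (\<Sum>z\<in>Z. Fp V E a b i z) * W V E a (l - i) b q)"
      by (simp add: sum.distrib sum_distrib_right sum.swap[of _ Z])
    also have "... = Wab V E a b (Suc l) p q + (\<Sum>i\<le>l. Fp V E a b (Suc i) p * W V E a (Suc l - Suc i) b q)"
      using False by (simp add: Z_def)
    also have "... = Wab V E a b (Suc l) p q + (\<Sum>i\<le>Suc l. Fp V E a b i p * W V E a (Suc l - i) b q)"
      using False by (simp only: sum.atMost_Suc_shift) simp
    finally show ?thesis .
  qed
qed

lemma Wab_ne_b: assumes "Wab V E a b l p q \<noteq> 0" shows "p \<noteq> b"
proof
  assume "p = b"
  then have "Wab V E a b l p q = 0" by (cases l) simp_all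
  then show False using assms by blast
qed

lemma Wab_reach:
  assumes g: "graph V E"
  shows "p \<noteq> a \<Longrightarrow> Wab V E a b l p q \<noteq> 0 \<Longrightarrow> reach E (V - {a,b}) p q"
proof (induction l arbitrary: p)
  case 0 then show ?case by (simp split: if_splits)
next
  case (Suc l)
  have pb: "p \<noteq> b" by (rule Wab_ne_b[OF Suc.prems(2)])
  then have "(\<Sum>z\<in>{z\<in>V. E p z \<and> z \<noteq> a}. Wab V E a b l z q) \<noteq> 0" using Suc.prems(2) by simp
  then have "\<exists>z\<in>{z\<in>V. E p z \<and> z \<noteq> a}. Wab V E a b l z q \<noteq> 0"
    by (meson sum.neutral)
  then obtain z where "z \<in> {z\<in>V. E p z \<and> z \<noteq> a}" "Wab V E a b l z q \<noteq> 0" by blast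
  then have z: "z \<in> V" "E p z" "z \<noteq> a" "Wab V E a b l z q \<noteq> 0" by auto
  have "reach E (V - {a,b}) z q" using Suc.IH z by blast
  moreover have "z \<noteq> b" by (rule Wab_ne_b[OF z(4)])
  moreover have "p \<in> V" using graph_in[OF g z(2)] by blast
  ultimately have "p \<in> V - {a,b}" "z \<in> V - {a,b}" "reach E (V - {a,b}) z q"
    using z pb Suc.prems(1) by auto
  then show ?case using reach_stepl[of E p z "V - {a,b}" q] z(2) by blast
qed

lemma reach_Wab:
  assumes g: "graph V E" and r: "reach E (V - {a,b}) p q" and q: "q \<notin> {a,b}"
  shows "\<exists>l. Wab V E a b l p q \<noteq> 0"
  using r unfolding reach_def
proof (induction rule: converse_rtranclp_induct)
  case base
  then show ?case using q by (intro exI[of _ 0]) simp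
next
  case (step p p')
  then obtain l where l: "Wab V E a b l p' q \<noteq> 0" by blast
  have fin: "finite {z\<in>V. E p z \<and> z \<noteq> a}" using graph_fin[OF g] by simp
  have pb: "p \<noteq> b" using step(1) by blast
  have "p' \<in> {z\<in>V. E p z \<and> z \<noteq> a}" using step(1) by blast
  then have "(\<Sum>z\<in>{z\<in>V. E p z \<and> z \<noteq> a}. Wab V E a b l z q) \<noteq> 0"
    using l fin by (simp add: sum_eq_0_iff) blast
  then have "Wab V E a b (Suc l) p q \<noteq> 0" using pb by simp
  then show ?case by blast
qed

lemma reach_iff_W:
  assumes g: "graph V E" and p: "p \<in> V - {a,b}" and q: "q \<in> V - {a,b}"
  shows "reach E (V - {a,b}) p q \<longleftrightarrow>
    \<not> (\<forall>l. W V E a l p q = (\<Sum>i\<le>l. Fp V E a b i p * W V E a (l - i) b q))"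
proof -
  have 1: "(W V E a l p q = (\<Sum>i\<le>l. Fp V E a b i p * W V E a (l - i) b q)) \<longleftrightarrow>
        (Wab V E a b l p q = 0)" for l
  proof -
    have "W V E a l p q = Wab V E a b l p q + (\<Sum>i\<le>l. Fp V E a b i p * W V E a (l - i) b q)"
      by (rule W_decomp)
    then show ?thesis by linarith
  qed
  have 2: "reach E (V - {a,b}) p q \<longleftrightarrow> (\<exists>l. Wab V E a b l p q \<noteq> 0)"
  proof
    assume "reach E (V - {a,b}) p q"
    then show "\<exists>l. Wab V E a b l p q \<noteq> 0" using reach_Wab[OF g] q by blast
  next
    assume "\<exists>l. Wab V E a b l p q \<noteq> 0"
    then obtain l where "Wab V E a b l p q \<noteq> 0" by blast
    moreover have "p \<noteq> a" using p by blast
    ultimately show "reach E (V - {a,b}) p q" using Wab_reach[OF g] by blast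
  qed
  show ?thesis unfolding 2 1 by auto
qed



lemma sum_bij_filter:
  assumes b: "bij_betw f A B" and pq: "\<forall>x\<in>A. (P x \<longleftrightarrow> Q (f x))"
    and gh: "\<forall>x\<in>A. P x \<longrightarrow> g x = h (f x)"
  shows "(\<Sum>x\<in>{x\<in>A. P x}. g x) = (\<Sum>y\<in>{y\<in>B. Q y}. h y)"
proof -
  have "f ` {x\<in>A. P x} = {y\<in>B. Q y}"
  proof
    show "f ` {x\<in>A. P x} \<subseteq> {y\<in>B. Q y}" using b pq by (auto simp: bij_betw_def)
    show "{y\<in>B. Q y} \<subseteq> f ` {x\<in>A. P x}"
    proof
      fix y assume y: "y \<in> {y\<in>B. Q y}"
      then obtain x where "x \<in> A" "f x = y" using b by (auto simp: bij_betw_def)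
      then show "y \<in> f ` {x\<in>A. P x}" using y pq by auto
    qed
  qed
  moreover have "inj_on f {x\<in>A. P x}" using b by (auto simp: bij_betw_def inj_on_def)
  ultimately have bb: "bij_betw f {x\<in>A. P x} {y\<in>B. Q y}" by (simp add: bij_betw_def)
  have "(\<Sum>x\<in>{x\<in>A. P x}. g x) = (\<Sum>x\<in>{x\<in>A. P x}. h (f x))" using gh by (intro sum.cong) auto
  also have "... = (\<Sum>y\<in>{y\<in>B. Q y}. h y)" by (rule sum.reindex_bij_betw[OF bb])
  finally show ?thesis .
qed

lemma W_inv:
  assumes fin: "finite V1" "finite V2" and k: "3 \<le> k"
  shows "eqv k V1 E1 c1 V2 E2 c2 t1 t2 \<Longrightarrow> length t1 = k \<Longrightarrow> length t2 = k \<Longrightarrow>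
    W V1 E1 (t1!0) l (t1!1) (t1!2) = W V2 E2 (t2!0) l (t2!1) (t2!2)"
proof (induction l arbitrary: t1 t2)
  case 0
  have "(t1!1 = t1!2) \<longleftrightarrow> (t2!1 = t2!2)" using eqv_init[OF 0(1), of 1 2] k by simp
  then show ?case by simp
next
  case (Suc l)
  obtain f where f: "bij_betw f V1 V2"
    "\<forall>x\<in>V1. \<forall>j<k. eqv k V1 E1 c1 V2 E2 c2 (t1[j:=x]) (t2[j:=f x])"
    using eqv_bij[OF fin Suc.prems(1)] by blast
  have "W V1 E1 (t1!0) (Suc l) (t1!1) (t1!2) = (\<Sum>z\<in>{z\<in>V1. E1 (t1!1) z \<and> z \<noteq> t1!0}. W V1 E1 (t1!0) l z (t1!2))"
    by simp
  also have "... = (\<Sum>z\<in>{z\<in>V2. E2 (t2!1) z \<and> z \<noteq> t2!0}. W V2 E2 (t2!0) l z (t2!2))"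
  proof (rule sum_bij_filter[OF f(1)])
    show "\<forall>x\<in>V1. (E1 (t1!1) x \<and> x \<noteq> t1!0) \<longleftrightarrow> (E2 (t2!1) (f x) \<and> f x \<noteq> t2!0)"
    proof
      fix x assume x: "x \<in> V1"
      have e: "eqv k V1 E1 c1 V2 E2 c2 (t1[2:=x]) (t2[2:=f x])" using f(2) x k by auto
      have i1: "(E1 (t1!1) x \<longleftrightarrow> E2 (t2!1) (f x))"
        using eqv_init[OF e, of 1 2] k Suc.prems(2,3) by simp
      have i2: "(t1!0 = x \<longleftrightarrow> t2!0 = f x)"
        using eqv_init[OF e, of 0 2] k Suc.prems(2,3) by simp
      show "(E1 (t1!1) x \<and> x \<noteq> t1!0) \<longleftrightarrow> (E2 (t2!1) (f x) \<and> f x \<noteq> t2!0)"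
        using i1 i2 by auto
    qed
    show "\<forall>x\<in>V1. E1 (t1!1) x \<and> x \<noteq> t1!0 \<longrightarrow> W V1 E1 (t1!0) l x (t1!2) = W V2 E2 (t2!0) l (f x) (t2!2)"
    proof (intro ballI impI)
      fix x assume x: "x \<in> V1"
      have e: "eqv k V1 E1 c1 V2 E2 c2 (t1[1:=x]) (t2[1:=f x])" using f(2) x k by auto
      have "W V1 E1 (t1[1:=x]!0) l (t1[1:=x]!1) (t1[1:=x]!2) = W V2 E2 (t2[1:=f x]!0) l (t2[1:=f x]!1) (t2[1:=f x]!2)"
        using Suc.IH[OF e] Suc.prems(2,3) by simp
      then show "W V1 E1 (t1!0) l x (t1!2) = W V2 E2 (t2!0) l (f x) (t2!2)"
        using k Suc.prems(2,3) by simp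
    qed
  qed
  also have "... = W V2 E2 (t2!0) (Suc l) (t2!1) (t2!2)" by simp
  finally show ?case .
qed

lemma Fp_inv:
  assumes fin: "finite V1" "finite V2" and k: "3 \<le> k"
  shows "eqv k V1 E1 c1 V2 E2 c2 t1 t2 \<Longrightarrow> length t1 = k \<Longrightarrow> length t2 = k \<Longrightarrow>
    Fp V1 E1 (t1!0) (t1!1) i (t1!2) = Fp V2 E2 (t2!0) (t2!1) i (t2!2)"
proof (induction i arbitrary: t1 t2)
  case 0
  have "(t1!2 = t1!1) \<longleftrightarrow> (t2!2 = t2!1)" using eqv_init[OF 0(1), of 2 1] k by simp
  then show ?case by simp
next
  case (Suc i)
  obtain f where f: "bij_betw f V1 V2"
    "\<forall>x\<in>V1. \<forall>j<k. eqv k V1 E1 c1 V2 E2 c2 (t1[j:=x]) (t2[j:=f x])"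
    using eqv_bij[OF fin Suc.prems(1)] by blast
  have pb: "(t1!2 = t1!1) \<longleftrightarrow> (t2!2 = t2!1)" using eqv_init[OF Suc.prems(1), of 2 1] k by simp
  have "(\<Sum>z\<in>{z\<in>V1. E1 (t1!2) z \<and> z \<noteq> t1!0}. Fp V1 E1 (t1!0) (t1!1) i z)
      = (\<Sum>z\<in>{z\<in>V2. E2 (t2!2) z \<and> z \<noteq> t2!0}. Fp V2 E2 (t2!0) (t2!1) i z)"
  proof (rule sum_bij_filter[OF f(1)])
    show "\<forall>x\<in>V1. (E1 (t1!2) x \<and> x \<noteq> t1!0) \<longleftrightarrow> (E2 (t2!2) (f x) \<and> f x \<noteq> t2!0)"
    proof
      fix x assume x: "x \<in> V1"
      have e: "eqv k V1 E1 c1 V2 E2 c2 (t1[2:=x]) (t2[2:=f x])" using f(2) x k by auto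
      have e0: "eqv k V1 E1 c1 V2 E2 c2 (t1[0:=x]) (t2[0:=f x])" using f(2) x k by auto
      have i1: "(E1 (t1!2) x \<longleftrightarrow> E2 (t2!2) (f x))"
        using eqv_init[OF e0, of 2 0] k Suc.prems(2,3) by simp
      have i2: "(t1!0 = x \<longleftrightarrow> t2!0 = f x)"
        using eqv_init[OF e, of 0 2] k Suc.prems(2,3) by simp
      show "(E1 (t1!2) x \<and> x \<noteq> t1!0) \<longleftrightarrow> (E2 (t2!2) (f x) \<and> f x \<noteq> t2!0)"
        using i1 i2 by auto
    qed
    show "\<forall>x\<in>V1. E1 (t1!2) x \<and> x \<noteq> t1!0 \<longrightarrow> Fp V1 E1 (t1!0) (t1!1) i x = Fp V2 E2 (t2!0) (t2!1) i (f x)"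
    proof (intro ballI impI)
      fix x assume x: "x \<in> V1"
      have e: "eqv k V1 E1 c1 V2 E2 c2 (t1[2:=x]) (t2[2:=f x])" using f(2) x k by auto
      have "Fp V1 E1 (t1[2:=x]!0) (t1[2:=x]!1) i (t1[2:=x]!2) = Fp V2 E2 (t2[2:=f x]!0) (t2[2:=f x]!1) i (t2[2:=f x]!2)"
        using Suc.IH[OF e] Suc.prems(2,3) by simp
      then show "Fp V1 E1 (t1!0) (t1!1) i x = Fp V2 E2 (t2!0) (t2!1) i (f x)"
        using k Suc.prems(2,3) by simp
    qed
  qed
  then show ?case using pb by simp
qed



lemma sep_transfer:
  assumes g1: "graph V1 E1" and g2: "graph V2 E2" and k: "3 \<le> k"
    and e: "eqv k V1 E1 c1 V2 E2 c2 t1 t2" and l1: "length t1 = k" and l2: "length t2 = k"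
    and t1: "t1!0 = a" "t1!1 = b" "t1!2 = x" and t2: "t2!0 = a'" "t2!1 = b'" "t2!2 = x'"
    and m1: "a \<in> V1" "b \<in> V1" "x \<in> V1" and m2: "a' \<in> V2" "b' \<in> V2" "x' \<in> V2"
    and d: "x \<noteq> a" "x \<noteq> b"
  shows "\<exists>g. bij_betw g V1 V2 \<and> (\<forall>y\<in>V1. eqv k V1 E1 c1 V2 E2 c2 (t1[2:=y]) (t2[2:=g y])
     \<and> (y \<in> {a,b} \<longleftrightarrow> g y \<in> {a',b'})
     \<and> (y \<notin> {a,b} \<longrightarrow> (reach E1 (V1 - {a,b}) x y \<longleftrightarrow> reach E2 (V2 - {a',b'}) x' (g y))))"
proof -
  have fin: "finite V1" "finite V2" using g1 g2 graph_fin by blast+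
  obtain g where g: "bij_betw g V1 V2"
    "\<forall>y\<in>V1. \<forall>j<k. eqv k V1 E1 c1 V2 E2 c2 (t1[j:=y]) (t2[j:=g y])"
    using eqv_bij[OF fin e] by blast
  have d2: "x' \<noteq> a'" "x' \<noteq> b'"
    using eqv_init[OF e, of 2 0] eqv_init[OF e, of 2 1] k t1 t2 d by auto
  have Winv: "W V1 E1 a l b x = W V2 E2 a' l b' x'" for l
    using W_inv[OF fin k e l1 l2, of l] t1 t2 by simp
  have "\<forall>y\<in>V1. eqv k V1 E1 c1 V2 E2 c2 (t1[2:=y]) (t2[2:=g y])
     \<and> (y \<in> {a,b} \<longleftrightarrow> g y \<in> {a',b'})
     \<and> (y \<notin> {a,b} \<longrightarrow> (reach E1 (V1 - {a,b}) x y \<longleftrightarrow> reach E2 (V2 - {a',b'}) x' (g y)))"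
  proof
    fix y assume y: "y \<in> V1"
    have gy: "g y \<in> V2" using g(1) y by (rule bij_betw_apply)
    have e2: "eqv k V1 E1 c1 V2 E2 c2 (t1[2:=y]) (t2[2:=g y])" using g(2) y k by auto
    have e1: "eqv k V1 E1 c1 V2 E2 c2 (t1[1:=y]) (t2[1:=g y])" using g(2) y k by auto
    have ia: "(a = y) \<longleftrightarrow> (a' = g y)" using eqv_init[OF e2, of 0 2] k l1 l2 t1 t2 by simp
    have ib: "(b = y) \<longleftrightarrow> (b' = g y)" using eqv_init[OF e2, of 1 2] k l1 l2 t1 t2 by simp
    have mem: "y \<in> {a,b} \<longleftrightarrow> g y \<in> {a',b'}" using ia ib by blast
    have W1: "W V1 E1 a l y x = W V2 E2 a' l (g y) x'" for l
      using W_inv[OF fin k e1, of l] l1 l2 k t1 t2 by simp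
    have F1: "Fp V1 E1 a b i y = Fp V2 E2 a' b' i (g y)" for i
      using Fp_inv[OF fin k e2, of i] l1 l2 k t1 t2 by simp
    have R: "y \<notin> {a,b} \<longrightarrow> (reach E1 (V1 - {a,b}) x y \<longleftrightarrow> reach E2 (V2 - {a',b'}) x' (g y))"
    proof
      assume yn: "y \<notin> {a,b}"
      then have yn2: "g y \<notin> {a',b'}" using mem by blast
      have "reach E1 (V1 - {a,b}) x y \<longleftrightarrow> reach E1 (V1 - {a,b}) y x"
        using greach_sym[OF g1] by blast
      also have "... \<longleftrightarrow> \<not> (\<forall>l. W V1 E1 a l y x = (\<Sum>i\<le>l. Fp V1 E1 a b i y * W V1 E1 a (l - i) b x))"
        using reach_iff_W[OF g1, of y a b x] y yn m1 d by blast
      also have "... \<longleftrightarrow> \<not> (\<forall>l. W V2 E2 a' l (g y) x' = (\<Sum>i\<le>l. Fp V2 E2 a' b' i (g y) * W V2 E2 a' (l - i) b' x'))"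
        unfolding W1 F1 Winv by (rule refl)
      also have "... \<longleftrightarrow> reach E2 (V2 - {a',b'}) (g y) x'"
        using reach_iff_W[OF g2, of "g y" a' b' x'] gy yn2 m2 d2 by blast
      also have "... \<longleftrightarrow> reach E2 (V2 - {a',b'}) x' (g y)"
        using greach_sym[OF g2] by blast
      finally show "reach E1 (V1 - {a,b}) x y \<longleftrightarrow> reach E2 (V2 - {a',b'}) x' (g y)" .
    qed
    show "eqv k V1 E1 c1 V2 E2 c2 (t1[2:=y]) (t2[2:=g y])
     \<and> (y \<in> {a,b} \<longleftrightarrow> g y \<in> {a',b'})
     \<and> (y \<notin> {a,b} \<longrightarrow> (reach E1 (V1 - {a,b}) x y \<longleftrightarrow> reach E2 (V2 - {a',b'}) x' (g y)))"
      using e2 mem R by blast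
  qed
  with g(1) show ?thesis by blast
qed

definition sv :: "'a set \<Rightarrow> ('a \<Rightarrow> 'a \<Rightarrow> bool) \<Rightarrow> 'a \<Rightarrow> bool" where
  "sv V E y \<longleftrightarrow> (\<exists>z. z \<noteq> y \<and> separator V E {y,z})"

lemma sv_transfer:
  assumes g1: "graph V1 E1" and g2: "graph V2 E2" and k: "3 \<le> k"
    and e: "eqv k V1 E1 c1 V2 E2 c2 t1 t2" and l1: "length t1 = k" and l2: "length t2 = k"
    and y: "t1!2 = y" "y \<in> V1" and y': "t2!2 = y'" "y' \<in> V2"
    and s: "sv V1 E1 y"
  shows "sv V2 E2 y'"
proof -
  have fin: "finite V1" "finite V2" using g1 g2 graph_fin by blast+
  obtain z where z: "z \<noteq> y" "separator V1 E1 {y,z}" using s unfolding sv_def by blast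
  then have zV: "z \<in> V1" unfolding separator_def by blast
  obtain p q where pq: "p \<in> V1 - {y,z}" "q \<in> V1 - {y,z}" "\<not> reach E1 (V1 - {y,z}) p q"
    using z(2) unfolding separator_def by blast
  obtain f0 where f0: "bij_betw f0 V1 V2"
    "\<forall>x\<in>V1. \<forall>j<k. eqv k V1 E1 c1 V2 E2 c2 (t1[j:=x]) (t2[j:=f0 x])"
    using eqv_bij[OF fin e] by blast
  have e0: "eqv k V1 E1 c1 V2 E2 c2 (t1[0:=y]) (t2[0:=f0 y])" using f0(2) y k by auto
  have "f0 y = y'" using eqv_init[OF e0, of 0 2] k l1 l2 y y' by simp
  then have e0': "eqv k V1 E1 c1 V2 E2 c2 (t1[0:=y]) (t2[0:=y'])" using e0 by simp
  obtain f1 where f1: "bij_betw f1 V1 V2"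
    "\<forall>x\<in>V1. \<forall>j<k. eqv k V1 E1 c1 V2 E2 c2 (t1[0:=y,j:=x]) (t2[0:=y',j:=f1 x])"
    using eqv_bij[OF fin e0'] by blast
  define z' where "z' = f1 z"
  have z'V: "z' \<in> V2" unfolding z'_def using f1(1) zV by (rule bij_betw_apply)
  have e1: "eqv k V1 E1 c1 V2 E2 c2 (t1[0:=y,1:=z]) (t2[0:=y',1:=z'])" using f1(2) zV k unfolding z'_def by auto
  have zz: "z' \<noteq> y'" using eqv_init[OF e1, of 1 0] k l1 l2 z(1) by simp
  obtain f2 where f2: "bij_betw f2 V1 V2"
    "\<forall>x\<in>V1. \<forall>j<k. eqv k V1 E1 c1 V2 E2 c2 (t1[0:=y,1:=z,j:=x]) (t2[0:=y',1:=z',j:=f2 x])"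
    using eqv_bij[OF fin e1] by blast
  define p' where "p' = f2 p"
  have p'V: "p' \<in> V2" unfolding p'_def using f2(1) pq(1) by (simp add: bij_betw_apply)
  have e2: "eqv k V1 E1 c1 V2 E2 c2 (t1[0:=y,1:=z,2:=p]) (t2[0:=y',1:=z',2:=p'])"
    using f2(2) pq(1) k unfolding p'_def by auto
  have pd: "p \<noteq> y" "p \<noteq> z" using pq(1) by auto
  have L1: "length (t1[0:=y,1:=z,2:=p]) = k" "length (t2[0:=y',1:=z',2:=p']) = k" using l1 l2 by auto
  have pd2: "p' \<noteq> y'" "p' \<noteq> z'"
    using eqv_init[OF e2, of 2 0] eqv_init[OF e2, of 2 1] k l1 l2 pd by auto
  obtain g where g: "bij_betw g V1 V2" "\<forall>u\<in>V1. (u \<in> {y,z} \<longleftrightarrow> g u \<in> {y',z'})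
     \<and> (u \<notin> {y,z} \<longrightarrow> (reach E1 (V1 - {y,z}) p u \<longleftrightarrow> reach E2 (V2 - {y',z'}) p' (g u)))"
    using sep_transfer[OF g1 g2 k e2 L1, of y z p y' z' p'] k l1 l2 y zV pq(1) y' z'V p'V pd
    by auto
  have qV: "q \<in> V1" using pq(2) by blast
  have gq: "g q \<in> V2" using g(1) qV by (rule bij_betw_apply)
  have "g q \<notin> {y',z'}" using g(2) pq(2) by blast
  moreover have "\<not> reach E2 (V2 - {y',z'}) p' (g q)" using g(2) pq by blast
  ultimately have "separator V2 E2 {y',z'}"
    unfolding separator_def using gq p'V pd2 z'V y' by blast
  then show ?thesis unfolding sv_def using zz by blast
qed



definition comp_of :: "('a \<Rightarrow> 'a \<Rightarrow> bool) \<Rightarrow> 'a set \<Rightarrow> 'a \<Rightarrow> 'a set" where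
  "comp_of E X u = {v\<in>X. reach E X u v}"

lemma comp_of_self: "u \<in> X \<Longrightarrow> u \<in> comp_of E X u"
  unfolding comp_of_def by simp

lemma comp_of_sub: "comp_of E X u \<subseteq> X"
  unfolding comp_of_def by blast

lemma comp_eq:
  assumes g: "graph V E" and c: "component E X K" and u: "u \<in> K"
  shows "K = comp_of E X u"
proof -
  obtain u0 where u0: "u0 \<in> X" "K = {v\<in>X. reach E X u0 v}" using c unfolding component_def by blast
  have r: "reach E X u0 u" using u u0 by blast
  have r': "reach E X u u0" using greach_sym[OF g r] .
  show ?thesis
  proof (rule set_eqI)
    fix v
    have "reach E X u0 v \<longleftrightarrow> reach E X u v"
    proof
      assume "reach E X u0 v" then show "reach E X u v" by (rule reach_trans[OF r'])
    next
      assume "reach E X u v" then show "reach E X u0 v" by (rule reach_trans[OF r])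
    qed
    then show "v \<in> K \<longleftrightarrow> v \<in> comp_of E X u" unfolding comp_of_def u0(2) by simp
  qed
qed

lemma comp_disj:
  assumes g: "graph V E" and z: "z \<notin> comp_of E X r"
  shows "comp_of E X z \<inter> comp_of E X r = {}"
proof (rule ccontr)
  assume "comp_of E X z \<inter> comp_of E X r \<noteq> {}"
  then obtain w where w: "w \<in> X" "reach E X z w" "reach E X r w" unfolding comp_of_def by blast
  have "reach E X w z" using greach_sym[OF g w(2)] .
  then have "reach E X r z" by (rule reach_trans[OF w(3)])
  moreover have "z \<in> X" using reach_end[OF w(2)] w(1) by auto
  ultimately show False using z unfolding comp_of_def by blast
qed

lemma comp_reach_inside:
  assumes "reach E X u v"
  shows "reach E (comp_of E X u) u v"
  using assms unfolding reach_def[of E X]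
proof (induction rule: rtranclp_induct)
  case base then show ?case by simp
next
  case (step y z)
  have ry: "reach E X u y" using step(1) unfolding reach_def .
  have "reach E X u z" using ry step(2) reach_step by fast
  then have "z \<in> comp_of E X u" using step(2) unfolding comp_of_def by blast
  moreover have "y \<in> comp_of E X u" using ry step(2) unfolding comp_of_def by blast
  ultimately show ?case using step(3) step(2) reach_step by fast
qed

lemma kconn2_conn:
  assumes "k_connected V E 2" "x \<in> V"
  shows "connected_on E (V - {x})"
  using assms unfolding k_connected_def by auto

lemma kconn2_card:
  assumes g: "graph V E" and kc: "k_connected V E 2" and s: "separator V E S"
  shows "card S \<ge> 2"
proof (rule ccontr)
  assume "\<not> card S \<ge> 2"
  then have "card S < 2" by simp
  moreover have "S \<subseteq> V" using s unfolding separator_def by blast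
  ultimately have "connected_on E (V - S)" using kc unfolding k_connected_def by blast
  then show False using s unfolding separator_def connected_on_def by blast
qed

lemma sep2_min:
  assumes g: "graph V E" and kc: "k_connected V E 2" and ab: "a \<noteq> b" and s: "separator V E {a,b}"
  shows "min_separator V E {a,b}"
  unfolding min_separator_def using s ab kconn2_card[OF g kc] by (simp add: numeral_2_eq_2)

lemma min_sep2:
  assumes g: "graph V E" and kc: "k_connected V E 2" and nk: "\<not> k_connected V E 3"
    and md: "min_degree_ge V E 3" and ms: "min_separator V E S"
  shows "\<exists>a b. a \<noteq> b \<and> S = {a,b} \<and> separator V E S"
proof -
  have fin: "finite V" using g graph_fin by blast
  have "card V > 2" using kc unfolding k_connected_def by blast
  then obtain v where v: "v \<in> V" by fastforce
  have "{u\<in>V. E v u} \<subseteq> V - {v}" using graph_irr[OF g] by blast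
  then have "card {u\<in>V. E v u} \<le> card (V - {v})" using fin by (simp add: card_mono)
  moreover have "card {u\<in>V. E v u} \<ge> 3" using md v unfolding min_degree_ge_def by blast
  moreover have "card (V - {v}) = card V - 1" using v fin by simp
  ultimately have cV: "card V > 3" by linarith
  then obtain S0 where S0: "S0 \<subseteq> V" "card S0 < 3" "\<not> connected_on E (V - S0)"
    using nk unfolding k_connected_def by blast
  have "card (V - S0) > 0" using S0 cV fin by (simp add: card_Diff_subset finite_subset)
  then have "V - S0 \<noteq> {}" by fastforce
  then have "separator V E S0" using S0 unfolding separator_def connected_on_def by blast
  then have "card S \<le> card S0" using ms unfolding min_separator_def by blast
  moreover have "card S \<ge> 2" using kconn2_card[OF g kc] ms unfolding min_separator_def by blast
  ultimately have "card S = 2" using S0 by linarith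
  then obtain a b where "S = {a,b}" "a \<noteq> b" by (meson card_2_iff)
  then show ?thesis using ms unfolding min_separator_def by blast
qed

lemma L_exit:
  assumes g: "graph V E" and kc: "k_connected V E 2" and SV: "S \<subseteq> V"
    and r: "r \<in> V - S" and x: "x \<in> V" "r \<noteq> x" and s: "s \<in> S - {x}"
  shows "\<exists>s'\<in>S - {x}. reach E ((comp_of E (V - S) r - {x}) \<union> {s'}) r s'"
proof -
  define C where "C = comp_of E (V - S) r - {x}"
  have rC: "r \<in> C" unfolding C_def using r x comp_of_self[of r "V - S" E] by simp
  have CS: "C \<subseteq> V - S" unfolding C_def using comp_of_sub[of E "V - S" r] by auto
  have cn: "connected_on E (V - {x})" by (rule kconn2_conn[OF kc x(1)])
  have rV: "r \<in> V - {x}" using r x by auto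
  have sV: "s \<in> V - {x}" using s SV by auto
  have "reach E (V - {x}) r s" using cn rV sV unfolding connected_on_def by simp
  then have "reach E C r s \<or> (\<exists>s'\<in>S - {x}. reach E (C \<union> {s'}) r s')"
    unfolding reach_def[of E "V - {x}"]
  proof (induction rule: rtranclp_induct)
    case base then show ?case by simp
  next
    case (step y z)
    have eyz: "E y z" and zV: "z \<in> V - {x}" using step(2) by auto
    show ?case
    proof (cases "reach E C r y")
      case False then show ?thesis using step(3) by simp
    next
      case True
      have yC: "y \<in> C" using reach_end[OF True] rC by auto
      show ?thesis
      proof (cases "z \<in> S")
        case True
        have zx: "z \<in> S - {x}" using True zV by simp
        have "reach E (C \<union> {z}) r y" by (rule reach_mono[OF \<open>reach E C r y\<close>]) auto
        then have "reach E (C \<union> {z}) r z" by (rule reach_step[of E "C \<union> {z}" r y z]) (use eyz yC in auto)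
        then show ?thesis using zx by auto
      next
        case False
        have "reach E (V - S) r y" by (rule reach_mono[OF \<open>reach E C r y\<close> CS])
        then have "reach E (V - S) r z" by (rule reach_step[of E "V - S" r y z]) (use eyz yC CS False zV in auto)
        then have "z \<in> C" unfolding C_def comp_of_def using False zV by simp
        then have "reach E C r z" by (rule reach_step[OF \<open>reach E C r y\<close> eyz yC])
        then show ?thesis by simp
      qed
    qed
  qed
  moreover have "\<not> reach E C r s"
  proof
    assume "reach E C r s"
    then have "r = s \<or> s \<in> C" using reach_end by fast
    then show False using r s CS by auto
  qed
  ultimately show ?thesis unfolding C_def by simp
qed



lemma sep_nonempty_other:
  assumes g: "graph V E" and c1: "component E (V - S) K" and s: "separator V E S"
  shows "\<exists>r\<in>V - S. r \<notin> K"
proof (rule ccontr)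
  assume "\<not> ?thesis"
  then have all: "V - S \<subseteq> K" by blast
  obtain p q where pq: "p \<in> V - S" "q \<in> V - S" "\<not> reach E (V - S) p q" using s unfolding separator_def by blast
  have pK: "p \<in> K" using all pq by blast
  have Keq: "K = comp_of E (V - S) p" by (rule comp_eq[OF g c1 pK])
  have "q \<in> K" using all pq by blast
  then have "reach E (V - S) p q" using Keq unfolding comp_of_def by simp
  then show False using pq by simp
qed

lemma notP0_sv:
  assumes g: "graph V E" and kc: "k_connected V E 2" and nk: "\<not> k_connected V E 3"
    and md: "min_degree_ge V E 3" and pg: "(S,K) \<in> PG V E" and np: "(S,K) \<notin> P0 V E"
  shows "\<exists>y\<in>K. sv V E y"
proof -
  have "\<exists>q\<in>PG V E. snd q \<subset> snd (S,K)" using pg np unfolding P0_def by blast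
  then obtain q where q0: "q \<in> PG V E" "snd q \<subset> K" by auto
  obtain S2 K2 where "q = (S2,K2)" by (cases q)
  then have q: "(S2,K2) \<in> PG V E" "K2 \<subset> K" using q0 by auto
  have ms2: "min_separator V E S2" and c2: "component E (V - S2) K2" using q(1) unfolding PG_def by auto
  obtain c d where cd: "c \<noteq> d" "S2 = {c,d}" "separator V E S2" using min_sep2[OF g kc nk md ms2] by blast
  have c1: "component E (V - S) K" using pg unfolding PG_def by auto
  show ?thesis
  proof (rule ccontr)
    assume ns: "\<not> ?thesis"
    have cK: "c \<notin> K"
    proof
      assume "c \<in> K"
      moreover have "sv V E c" unfolding sv_def using cd by (intro exI[of _ d]) auto
      ultimately show False using ns by blast
    qed
    have dK: "d \<notin> K"
    proof
      assume "d \<in> K"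
      moreover have "separator V E {d,c}" using cd by (simp add: insert_commute)
      then have "sv V E d" unfolding sv_def using cd by (intro exI[of _ c]) auto
      ultimately show False using ns \<open>d \<in> K\<close> by blast
    qed
    obtain u2 where u2: "u2 \<in> V - S2" "K2 = {v\<in>V - S2. reach E (V - S2) u2 v}"
      using c2 unfolding component_def by blast
    have u2K2: "u2 \<in> K2" using u2 by simp
    then have u2K: "u2 \<in> K" using q(2) by blast
    have Keq: "K = comp_of E (V - S) u2" by (rule comp_eq[OF g c1 u2K])
    have KV: "K \<subseteq> V - S2"
    proof
      fix v assume "v \<in> K"
      then have "v \<in> V" using Keq comp_of_sub[of E "V - S" u2] by blast
      then show "v \<in> V - S2" using cd(2) cK dK \<open>v \<in> K\<close> by blast
    qed
    have "K \<subseteq> K2"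
    proof
      fix v assume v: "v \<in> K"
      then have "reach E (V - S) u2 v" using Keq unfolding comp_of_def by simp
      then have "reach E (comp_of E (V - S) u2) u2 v" by (rule comp_reach_inside)
      then have "reach E K u2 v" using Keq by simp
      then have "reach E (V - S2) u2 v" using KV by (rule reach_mono)
      moreover have "v \<in> V - S2" using KV v by blast
      ultimately show "v \<in> K2" using u2(2) by simp
    qed
    then show False using q(2) by blast
  qed
qed



lemma sv_notP0:
  assumes g: "graph V E" and kc: "k_connected V E 2" and nk: "\<not> k_connected V E 3"
    and md: "min_degree_ge V E 3" and pg: "(S,K) \<in> PG V E" and cK: "c \<in> K" and sc: "sv V E c"
  shows "(S,K) \<notin> P0 V E"
proof -
  have ms: "min_separator V E S" and c1: "component E (V - S) K" using pg unfolding PG_def by auto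
  obtain a b where ab: "a \<noteq> b" "S = {a,b}" "separator V E S" using min_sep2[OF g kc nk md ms] by blast
  obtain d where d: "d \<noteq> c" "separator V E {c,d}" using sc unfolding sv_def by blast
  have SV: "S \<subseteq> V" using ab(3) unfolding separator_def by blast
  have fin: "finite V" using g graph_fin by blast
  have Keq: "K = comp_of E (V - S) c" by (rule comp_eq[OF g c1 cK])
  have KS: "K \<subseteq> V - S" using Keq comp_of_sub by metis
  have cV: "c \<in> V - S" using cK KS by blast
  have dV: "d \<in> V" using d(2) unfolding separator_def by blast
  obtain u u' where uu: "u \<in> V - {c,d}" "u' \<in> V - {c,d}" "\<not> reach E (V - {c,d}) u u'"
    using d(2) unfolding separator_def by blast
  obtain r where r: "r \<in> V - S" "r \<notin> K" using sep_nonempty_other[OF g c1 ab(3)] by blast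
  have cdmin: "min_separator V E {c,d}" using sep2_min[OF g kc _ d(2)] d(1) by metis
  have hR: "\<exists>s'\<in>S - {x}. reach E (V - {c,d}) z s'"
    if z: "z \<in> V - S" "z \<notin> K" and x: "x \<in> V" "z \<noteq> x" and sx: "s \<in> S - {x}" and cdx: "{c,d} - {x} \<subseteq> K"
    for z x s
  proof -
    obtain s' where s': "s' \<in> S - {x}" "reach E ((comp_of E (V - S) z - {x}) \<union> {s'}) z s'"
      using L_exit[OF g kc SV z(1) x sx] by blast
    have disj: "comp_of E (V - S) z \<inter> K = {}"
      using comp_disj[OF g, of z "V - S" c] z(2) Keq by simp
    have "(comp_of E (V - S) z - {x}) \<union> {s'} \<subseteq> V - {c,d}"
    proof
      fix w assume w: "w \<in> (comp_of E (V - S) z - {x}) \<union> {s'}"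
      show "w \<in> V - {c,d}"
      proof (cases "w = s'")
        case True
        have "s' \<in> V" using s'(1) SV by blast
        moreover have "s' \<notin> {c,d}"
        proof
          assume "s' \<in> {c,d}"
          then have "s' \<in> K" using cdx s'(1) by blast
          then show False using KS s'(1) by blast
        qed
        ultimately show ?thesis using True by blast
      next
        case False
        then have w1: "w \<in> comp_of E (V - S) z" "w \<noteq> x" using w by auto
        then have "w \<in> V" using comp_of_sub[of E "V - S" z] by blast
        moreover have "w \<notin> K" using disj w1 by blast
        then have "w \<notin> {c,d}" using cdx w1(2) by blast
        ultimately show ?thesis by blast
      qed
    qed
    then have "reach E (V - {c,d}) z s'" by (rule reach_mono[OF s'(2)])
    then show ?thesis using s'(1) by blast
  qed
  have goal: "\<exists>S2 K2. (S2,K2) \<in> PG V E \<and> K2 \<subset> K"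
  proof (cases "d \<in> K")
    case True
    have Sb: "S - {b} = {a}" and Sa: "S - {a} = {b}" using ab by auto
    have rb: "reach E (V - {c,d}) r b"
    proof -
      obtain s' where "s' \<in> S - {a}" "reach E (V - {c,d}) r s'"
        using hR[OF r, of a b] r(1) ab SV cK True by auto
      then show ?thesis using Sa by auto
    qed
    have ra: "reach E (V - {c,d}) r a"
    proof -
      obtain s' where "s' \<in> S - {b}" "reach E (V - {c,d}) r s'"
        using hR[OF r, of b a] r(1) ab SV cK True by auto
      then show ?thesis using Sb by auto
    qed
    have ba: "reach E (V - {c,d}) b a" using reach_trans[OF greach_sym[OF g rb] ra] .
    have A: "reach E (V - {c,d}) z a" if z: "z \<in> V - {c,d}" "z \<notin> K" for z
    proof (cases "z \<in> S")
      case True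
      then show ?thesis using ab(2) ba by auto
    next
      case False
      then have "z \<in> V - S" "z \<noteq> b" using z ab(2) by auto
      then obtain s' where "s' \<in> S - {b}" "reach E (V - {c,d}) z s'"
        using hR[of z b a] z ab SV cK True by auto
      then show ?thesis using Sb by auto
    qed
    obtain u0 where u0: "u0 \<in> V - {c,d}" "\<not> reach E (V - {c,d}) u0 a"
    proof (cases "reach E (V - {c,d}) u a")
      case True
      have "\<not> reach E (V - {c,d}) u' a"
      proof
        assume "reach E (V - {c,d}) u' a"
        then have "reach E (V - {c,d}) a u'" by (rule greach_sym[OF g])
        then have "reach E (V - {c,d}) u u'" by (rule reach_trans[OF True])
        then show False using uu by simp
      qed
      then show ?thesis using that uu by blast
    next
      case False
      then show ?thesis using that uu by blast
    qed
    have u0K: "u0 \<in> K" using A u0 by blast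
    define K2 where "K2 = comp_of E (V - {c,d}) u0"
    have "(({c,d}, K2) \<in> PG V E)"
      unfolding PG_def K2_def comp_of_def component_def using cdmin u0(1) by blast
    moreover have "K2 \<subseteq> K"
    proof
      fix v assume v: "v \<in> K2"
      then have v1: "v \<in> V - {c,d}" "reach E (V - {c,d}) u0 v" unfolding K2_def comp_of_def by auto
      show "v \<in> K"
      proof (rule ccontr)
        assume "v \<notin> K"
        then have "reach E (V - {c,d}) v a" using A v1(1) by blast
        then have "reach E (V - {c,d}) u0 a" by (rule reach_trans[OF v1(2)])
        then show False using u0 by simp
      qed
    qed
    moreover have "c \<notin> K2" unfolding K2_def comp_of_def by blast
    ultimately show ?thesis using cK by blast
  next
    case dK: False
    show ?thesis
    proof (cases "\<exists>z\<in>K - {c}. \<exists>s\<in>S. \<not> reach E ((K - {c}) \<union> {s}) z s")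
      case True
      then obtain z s where zs: "z \<in> K - {c}" "s \<in> S" "\<not> reach E ((K - {c}) \<union> {s}) z s" by blast
      define s2 where "s2 = (if s = a then b else a)"
      have s2: "s2 \<in> S" "s2 \<noteq> s" "S = {s, s2}" using ab zs(2) unfolding s2_def by auto
      have s2c: "s2 \<noteq> c" using s2(1) cV by blast
      define K2 where "K2 = comp_of E (K - {c}) z"
      have K2eq: "K2 = comp_of E (V - {s2,c}) z"
      proof
        show "K2 \<subseteq> comp_of E (V - {s2,c}) z"
        proof
          fix v assume "v \<in> K2"
          then have v: "v \<in> K - {c}" "reach E (K - {c}) z v" unfolding K2_def comp_of_def by auto
          have sub: "K - {c} \<subseteq> V - {s2,c}" using KS s2(1) by blast
          have "reach E (V - {s2,c}) z v" using v(2) sub by (rule reach_mono)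
          then show "v \<in> comp_of E (V - {s2,c}) z" unfolding comp_of_def using v(1) sub by blast
        qed
      next
        show "comp_of E (V - {s2,c}) z \<subseteq> K2"
        proof
          fix v assume "v \<in> comp_of E (V - {s2,c}) z"
          then have rv: "reach E (V - {s2,c}) z v" unfolding comp_of_def by blast
          have "reach E (K - {c}) z v"
            using rv unfolding reach_def[of E "V - {s2,c}"]
          proof (induction rule: rtranclp_induct)
            case base then show ?case by simp
          next
            case (step y w)
            have eyw: "E y w" and wV: "w \<in> V - {s2,c}" using step(2) by auto
            have yK: "y \<in> K - {c}" using reach_end[OF step(3)] zs(1) by auto
            show ?case
            proof (cases "w \<in> S")
              case True
              then have ws: "w = s" using s2(3) wV by auto
              have "reach E ((K - {c}) \<union> {s}) z y" by (rule reach_mono[OF step(3)]) auto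
              then have "reach E ((K - {c}) \<union> {s}) z s"
                by (rule reach_step[of E "(K - {c}) \<union> {s}" z y s]) (use eyw ws yK in auto)
              then show ?thesis using zs(3) by simp
            next
              case False
              have "reach E (V - S) c y" using yK Keq unfolding comp_of_def by simp
              then have "reach E (V - S) c w"
                by (rule reach_step[of E "V - S" c y w]) (use eyw yK KS False wV in auto)
              then have "w \<in> K" using Keq False wV unfolding comp_of_def by simp
              then have "w \<in> K - {c}" using wV by simp
              then show ?thesis by (rule reach_step[OF step(3) eyw yK])
            qed
          qed
          moreover have "v \<in> K - {c}" using reach_end[OF calculation] zs(1) by auto
          ultimately show "v \<in> K2" unfolding K2_def comp_of_def by simp
        qed
      qed
      have zV: "z \<in> V - {s2,c}" using zs(1) KS s2(1) by blast
      have sV: "s \<in> V - {s2,c}" using zs(2) SV s2(2) cV by blast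
      have "\<not> reach E (V - {s2,c}) z s"
      proof
        assume "reach E (V - {s2,c}) z s"
        then have "s \<in> K2" unfolding K2eq comp_of_def using sV by simp
        then have "s \<in> K" unfolding K2_def comp_of_def by simp
        then show False using KS zs(2) by blast
      qed
      then have sep: "separator V E {s2,c}" unfolding separator_def
        using zV sV s2(1) SV cV by blast
      have "min_separator V E {s2,c}" by (rule sep2_min[OF g kc s2c sep])
      moreover have "component E (V - {s2,c}) K2" unfolding component_def K2eq comp_of_def using zV by blast
      ultimately have "({s2,c}, K2) \<in> PG V E" unfolding PG_def by simp
      moreover have "K2 \<subseteq> K" unfolding K2_def comp_of_def by blast
      moreover have "c \<notin> K2" unfolding K2_def comp_of_def by blast
      ultimately show ?thesis using cK by blast
    next
      case False
      then have allr: "\<And>z s. z \<in> K - {c} \<Longrightarrow> s \<in> S \<Longrightarrow> reach E ((K - {c}) \<union> {s}) z s" by blast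
      obtain z1 where z1: "z1 \<in> K - {c}"
      proof (rule ccontr)
        assume "\<not> thesis"
        then have none: "K - {c} = {}" using that by blast
        have "{u\<in>V. E c u} \<subseteq> S"
        proof
          fix w assume w: "w \<in> {u\<in>V. E c u}"
          show "w \<in> S"
          proof (rule ccontr)
            assume wS: "w \<notin> S"
            have "w \<noteq> c" using w graph_irr[OF g] by blast
            have "reach E (V - S) c w" using w wS cV by (intro reach_edge) auto
            then have "w \<in> K" using Keq w wS unfolding comp_of_def by simp
            then show False using none \<open>w \<noteq> c\<close> by blast
          qed
        qed
        then have "card {u\<in>V. E c u} \<le> card S" using fin SV by (intro card_mono) (auto intro: finite_subset)
        also have "... = 2" using ab by simp
        finally have "card {u\<in>V. E c u} \<le> 2" .
        moreover have "card {u\<in>V. E c u} \<ge> 3" using md cV unfolding min_degree_ge_def by blast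
        ultimately show False by linarith
      qed
      define s0 where "s0 = (if d = a then b else a)"
      have s0: "s0 \<in> S" "s0 \<noteq> d" using ab unfolding s0_def by auto
      have KV: "K - {c} \<subseteq> V - {c,d}" using KS dK by blast
      have toS: "reach E (V - {c,d}) s s0" if s: "s \<in> S" "s \<noteq> d" for s
      proof (cases "s = s0")
        case True then show ?thesis by simp
      next
        case False
        have sub: "(K - {c}) \<union> {s} \<subseteq> V - {c,d}" "(K - {c}) \<union> {s0} \<subseteq> V - {c,d}"
          using KV s SV s0 cV by auto
        have r1: "reach E (V - {c,d}) z1 s" using reach_mono[OF allr[OF z1 s(1)] sub(1)] .
        have r2: "reach E (V - {c,d}) z1 s0" using reach_mono[OF allr[OF z1 s0(1)] sub(2)] .
        show ?thesis using reach_trans[OF greach_sym[OF g r1] r2] .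
      qed
      have allreach: "reach E (V - {c,d}) w s0" if w: "w \<in> V - {c,d}" for w
      proof (cases "w \<in> S")
        case True then show ?thesis using toS w by blast
      next
        case wS: False
        show ?thesis
        proof (cases "w \<in> K")
          case True
          have sub: "(K - {c}) \<union> {s0} \<subseteq> V - {c,d}" using KV SV s0 cV by auto
          have "w \<in> K - {c}" using True w by blast
          then show ?thesis using reach_mono[OF allr[OF _ s0(1)] sub] by blast
        next
          case False
          have cdd: "{c,d} - {d} \<subseteq> K" using cK by blast
          obtain s' where s': "s' \<in> S - {d}" "reach E (V - {c,d}) w s'"
            using hR[of w d s0] w wS False dV s0 cdd by blast
          have "reach E (V - {c,d}) s' s0" using toS s'(1) by blast
          then show ?thesis using reach_trans[OF s'(2)] by blast
        qed
      qed
      have "reach E (V - {c,d}) u s0" using allreach uu(1) by blast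
      moreover have "reach E (V - {c,d}) s0 u'" using greach_sym[OF g allreach[OF uu(2)]] .
      ultimately have "reach E (V - {c,d}) u u'" by (rule reach_trans)
      then show ?thesis using uu(3) by simp
    qed
  qed
  then obtain S2 K2 where "(S2,K2) \<in> PG V E" "K2 \<subset> K" by blast
  then show ?thesis unfolding P0_def by force
qed



theorem lemma17:
  fixes k :: nat
    and VG :: "'a set" and EG :: "'a \<Rightarrow> 'a \<Rightarrow> bool" and cG :: "'a \<Rightarrow> 'c"
    and VH :: "'b set" and EH :: "'b \<Rightarrow> 'b \<Rightarrow> bool" and cH :: "'b \<Rightarrow> 'c"
  assumes "k \<ge> 3"
    and "graph VG EG" and "graph VH EH"
    and "k_connected VG EG 2" and "\<not> k_connected VG EG 3"
    and "k_connected VH EH 2" and "\<not> k_connected VH EH 3"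
    and "min_degree_ge VG EG 3" and "min_degree_ge VH EH 3"
    and "v \<in> V_bot VG EG"
    and "w \<in> VH - V_bot VH EH"
  shows "\<not> wl_same_vertex_color k VG EG cG v VH EH cH w"
proof
  assume same: "wl_same_vertex_color k VG EG cG v VH EH cH w"
  note k3 = assms(1) and gG = assms(2) and gH = assms(3) and kcG = assms(4) and nkG = assms(5)
    and kcH = assms(6) and nkH = assms(7) and mdG = assms(8) and mdH = assms(9)
  have eGH: "eqv k VG EG cG VH EH cH (replicate k v) (replicate k w)"
    using same unfolding wl_same_vertex_color_def eqv_def .
  have e: "eqv k VH EH cH VG EG cG (replicate k w) (replicate k v)" by (rule eqv_sym[OF eGH])
  have finG: "finite VG" using gG graph_fin by blast
  have finH: "finite VH" using gH graph_fin by blast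
  have vG: "v \<in> VG" and vnot: "\<forall>p\<in>P0 VG EG. v \<notin> snd p" using assms(10) unfolding V_bot_def by auto
  have wH: "w \<in> VH" using assms(11) by blast
  obtain p where p: "p \<in> P0 VH EH" "w \<in> snd p" using assms(11) unfolding V_bot_def by blast
  obtain S K where "p = (S,K)" by (cases p)
  then have SK: "(S,K) \<in> P0 VH EH" "w \<in> K" using p by auto
  have pg: "(S,K) \<in> PG VH EH" using SK(1) unfolding P0_def by blast
  have ms: "min_separator VH EH S" and c1: "component EH (VH - S) K" using pg unfolding PG_def by auto
  obtain a b where ab: "a \<noteq> b" "S = {a,b}" "separator VH EH S" using min_sep2[OF gH kcH nkH mdH ms] by blast
  have SV: "a \<in> VH" "b \<in> VH" using ab unfolding separator_def by auto
  have Keq: "K = comp_of EH (VH - S) w" by (rule comp_eq[OF gH c1 SK(2)])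
  have wS: "w \<noteq> a" "w \<noteq> b" using SK(2) Keq comp_of_sub[of EH "VH - S" w] ab(2) by auto
  obtain f0 where f0: "bij_betw f0 VH VG"
    "\<forall>x\<in>VH. \<forall>j<k. eqv k VH EH cH VG EG cG ((replicate k w)[j:=x]) ((replicate k v)[j:=f0 x])"
    using eqv_bij[OF finH finG e] by blast
  define a' where "a' = f0 a"
  have a'G: "a' \<in> VG" unfolding a'_def using f0(1) SV(1) by (rule bij_betw_apply)
  have e1: "eqv k VH EH cH VG EG cG ((replicate k w)[0:=a]) ((replicate k v)[0:=a'])"
    using f0(2) SV(1) k3 unfolding a'_def by auto
  obtain f1 where f1: "bij_betw f1 VH VG"
    "\<forall>x\<in>VH. \<forall>j<k. eqv k VH EH cH VG EG cG ((replicate k w)[0:=a,j:=x]) ((replicate k v)[0:=a',j:=f1 x])"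
    using eqv_bij[OF finH finG e1] by blast
  define b' where "b' = f1 b"
  have b'G: "b' \<in> VG" unfolding b'_def using f1(1) SV(2) by (rule bij_betw_apply)
  define T1 where "T1 = (replicate k w)[0:=a,1:=b]"
  define T2 where "T2 = (replicate k v)[0:=a',1:=b']"
  have e2: "eqv k VH EH cH VG EG cG T1 T2"
    using f1(2) SV(2) k3 unfolding b'_def T1_def T2_def by auto
  have L: "length T1 = k" "length T2 = k" unfolding T1_def T2_def by auto
  have T1n: "T1!0 = a" "T1!1 = b" "T1!2 = w" unfolding T1_def using k3 by auto
  have T2n: "T2!0 = a'" "T2!1 = b'" "T2!2 = v" unfolding T2_def using k3 by auto
  have a'b': "a' \<noteq> b'" using eqv_init[OF e2, of 0 1] k3 T1n T2n ab(1) by auto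
  have va: "v \<noteq> a'" "v \<noteq> b'" using eqv_init[OF e2, of 2 0] eqv_init[OF e2, of 2 1] k3 T1n T2n wS by auto
  obtain g where g: "bij_betw g VH VG" "\<forall>y\<in>VH. eqv k VH EH cH VG EG cG (T1[2:=y]) (T2[2:=g y])
     \<and> (y \<in> {a,b} \<longleftrightarrow> g y \<in> {a',b'})
     \<and> (y \<notin> {a,b} \<longrightarrow> (reach EH (VH - {a,b}) w y \<longleftrightarrow> reach EG (VG - {a',b'}) v (g y)))"
    using sep_transfer[OF gH gG k3 e2 L T1n T2n SV wH a'G b'G vG wS] by blast
  obtain y0 where y0: "y0 \<in> VH - S" "\<not> reach EH (VH - S) w y0"
  proof -
    obtain p q where pq: "p \<in> VH - S" "q \<in> VH - S" "\<not> reach EH (VH - S) p q"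
      using ab(3) unfolding separator_def by blast
    show ?thesis
    proof (cases "reach EH (VH - S) w p")
      case False then show ?thesis using that pq by blast
    next
      case True
      have "\<not> reach EH (VH - S) w q"
      proof
        assume "reach EH (VH - S) w q"
        moreover have "reach EH (VH - S) p w" using greach_sym[OF gH True] .
        ultimately show False using pq(3) reach_trans by metis
      qed
      then show ?thesis using that pq by blast
    qed
  qed
  have y0G: "g y0 \<in> VG" using g(1) y0(1) by (simp add: bij_betw_apply)
  have y0n: "g y0 \<notin> {a',b'}" using g(2) y0(1) ab(2) by blast
  have y0r: "\<not> reach EG (VG - {a',b'}) v (g y0)" using g(2) y0 ab(2) by blast
  have sepG: "separator VG EG {a',b'}" unfolding separator_def
    using a'G b'G vG va y0G y0n y0r by blast
  define K' where "K' = comp_of EG (VG - {a',b'}) v"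
  have pgG: "({a',b'}, K') \<in> PG VG EG"
    unfolding PG_def K'_def comp_of_def component_def
    using sep2_min[OF gG kcG a'b' sepG] vG va by blast
  have vK': "v \<in> K'" unfolding K'_def comp_of_def using vG va by simp
  have npG: "({a',b'}, K') \<notin> P0 VG EG" using vnot vK' by force
  obtain y' where y': "y' \<in> K'" "sv VG EG y'" using notP0_sv[OF gG kcG nkG mdG pgG npG] by blast
  have y'1: "y' \<in> VG - {a',b'}" "reach EG (VG - {a',b'}) v y'" using y'(1) unfolding K'_def comp_of_def by auto
  obtain y where y: "y \<in> VH" "g y = y'" using g(1) y'1(1) unfolding bij_betw_def by blast
  have yn: "y \<notin> {a,b}" using g(2) y y'1(1) by blast
  have yr: "reach EH (VH - {a,b}) w y" using g(2) y yn y'1(2) by blast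
  have yK: "y \<in> K" using Keq yr y(1) yn ab(2) unfolding comp_of_def by blast
  have ey: "eqv k VH EH cH VG EG cG (T1[2:=y]) (T2[2:=y'])" using g(2) y by blast
  have ey': "eqv k VG EG cG VH EH cH (T2[2:=y']) (T1[2:=y])" by (rule eqv_sym[OF ey])
  have svy: "sv VH EH y"
    by (rule sv_transfer[OF gG gH k3 ey' _ _ _ _ _ _ y'(2)]) (use L k3 y y'1 in auto)
  have "(S,K) \<notin> P0 VH EH" by (rule sv_notP0[OF gH kcH nkH mdH pg yK svy])
  then show False using SK(1) by blast
qed


end
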